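(* Assume $N\subseteq Z(G)$ and let $\sigma\in Z^2(\bar G,N)$ be a $2$-cocycle of the central extension $1\to N\to G\to\bar G\to 1$, given by $\sigma(\bar x,\bar y)=s(\bar x)s(\bar y)s(\bar x\bar y)^{-1}$ for a set-theoretic section $s:\bar G\to G$ with $s(\bar 1)=1$. Then there is an isomorphism of quasi-Hopf algebras $$D^{\omega}(G,N)\cong \mathbb{C}[N]\#_\sigma D^{\omega}(\bar G),$$ where $\mathbb{C}[N]\#_\sigma D^{\omega}(\bar G)$ is the vector space $\mathbb{C}[N]\otimes D^{\omega}(\bar G)$ with basis $m\#(e(\bar g)\bowtie\bar x)$ ($m\in N$, $\bar g,\bar x\in\bar G$), multiplication $$\big(m\#(e(\bar g)\bowtie\bar x)\big)\big(n\#(e(\bar h)\bowtie\bar y)\big)= mn\,\sigma(\bar x,\bar y)\#\big((e(\bar g)\bowtie\bar x)(e(\bar h)\bowtie\bar y)\big),$$ coproduct $\Delta(m\#(e(\bar g)\bowtie\bar x))=\sum_{\bar a\bar b=\bar g}\gamma_{\bar x}(\bar a,\bar b)\,(m\#(e(\bar a)\bowtie\bar x))\otimes(m\#(e(\bar b)\bowtie\bar x))$, and associator, counit, antipode, $\alpha,\beta$ those of $D^{\omega}(\bar G)$ (with $1\in N$ in the first tensor factor for $\Phi,\alpha,\beta$, counit $\epsilon(m\#u)=\epsilon(u)$, and antipode $S(m\#(e(\bar g)\bowtie \bar x))$ given by the antipode of $D^\omega(\bar G)$ twisted correspondingly so that the isomorphism $m\#(e(\bar g)\bowtie\bar x)\mapsto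 e(\bar g)\bowtie m\,s(\bar x)$ holds).
   Context: Notation. $G$ is a finite group, $N\trianglelefteq G$, $\bar G=G/N$, $\bar g=gN$, $\bar g^x=\bar x^{-1}\bar g\bar x$. $\omega$ is a normalized $\mathbb{C}^*$-valued $3$-cocycle on $\bar G$, and $\theta_{\bar g}(\bar x,\bar y)=\frac{\omega(\bar g,\bar x,\bar y)\omega(\bar x,\bar y,\bar g^{xy})}{\omega(\bar x,\bar g,\bar y^{g})}$, $\gamma_{\bar g}(\bar x,\bar y)=\frac{\omega(\bar x,\bar y,\bar g)\omega(\bar g,\bar x^{g},\bar y^{g})}{\omega(\bar x,\bar g,\bar y^{g})}$. $D^{\omega}(G,N)$ is the quasi-Hopf algebra with basis $e(\bar g)\bowtie x$ ($\bar g\in\bar G$, $x\in G$), product $(e(\bar g)\bowtie x)(e(\bar h)\bowtie y)=\delta_{\bar g^x,\bar h}\theta_{\bar g}(\bar x,\bar y)e(\bar g)\bowtie xy$, coproduct $\Delta(e(\bar g)\bowtie x)=\sum_{\bar a\bar b=\bar g}\gamma_{\bar x}(\bar a,\bar b)(e(\bar a)\bowtie x)\otimes(e(\bar b)\bowtie x)$, associator $\Phi=\sum\omega(\bar g,\bar h,\bar k)^{-1}(e(\bar g)\bowtie1)\otimes(e(\bar h)\bowtie1)\otimes(e(\bar k)\bowtie1)$, counit $\epsilon(e(\bar g)\bowtie x)=\delta_{\bar g,\bar 1}$, antipode $S(e(\bar g)\bowtie x)=\theta_{\bar g^{-1}}(\bar x,\bar x^{-1})\gamma_{\bar x}(\bar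 g,\bar g^{-1})^{-1}e((\bar g^{-1})^x)\bowtie x^{-1}$, $\alpha=1$, $\beta=\sum_{\bar g}\omega(\bar g,\bar g^{-1},\bar g)e(\bar g)\bowtie 1$. The twisted quantum double $D^{\omega}(\bar G)$ is $D^{\omega}(\bar G,\{1\})$, with basis $e(\bar g)\bowtie\bar x$, $\bar g,\bar x\in\bar G$, and the same formulas. *)

theory Defs
  imports "HOL-Algebra.Algebra" Complex_Main
begin

text \<open>An element of the algebra is a function 'b => complex vanishing off qbasis.
  qmult b b' is the product of basis elements b, b' (as a vector); qcomult b is
  Delta(b) as a vector in A (x) A (a function on pairs of basis elements);
  qassoc is the associator Phi in A (x) A (x) A; qcounit b = epsilon(b);
  qantipode b = S(b) as a vector; qunit, qalpha, qbeta are vectors.\<close>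

record 'b qhalg =
  qbasis :: "'b set"
  qmult :: "'b \<Rightarrow> 'b \<Rightarrow> 'b \<Rightarrow> complex"
  qunit :: "'b \<Rightarrow> complex"
  qcomult :: "'b \<Rightarrow> 'b \<times> 'b \<Rightarrow> complex"
  qassoc :: "'b \<times> 'b \<times> 'b \<Rightarrow> complex"
  qcounit :: "'b \<Rightarrow> complex"
  qantipode :: "'b \<Rightarrow> 'b \<Rightarrow> complex"
  qalpha :: "'b \<Rightarrow> complex"
  qbeta :: "'b \<Rightarrow> complex"

definition qvecs :: "'b qhalg \<Rightarrow> ('b \<Rightarrow> complex) set" where
  "qvecs A = {f. \<forall>b. b \<notin> qbasis A \<longrightarrow> f b = 0}"

definition qmulL :: "'b qhalg \<Rightarrow> ('b \<Rightarrow> complex) \<Rightarrow> ('b \<Rightarrow> complex) \<Rightarrow> 'b \<Rightarrow> complex" where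
  "qmulL A f g = (\<lambda>c. \<Sum>a\<in>qbasis A. \<Sum>a'\<in>qbasis A. f a * g a' * qmult A a a' c)"

definition qcomulL :: "'b qhalg \<Rightarrow> ('b \<Rightarrow> complex) \<Rightarrow> 'b \<times> 'b \<Rightarrow> complex" where
  "qcomulL A f = (\<lambda>p. \<Sum>a\<in>qbasis A. f a * qcomult A a p)"

definition qcounitL :: "'b qhalg \<Rightarrow> ('b \<Rightarrow> complex) \<Rightarrow> complex" where
  "qcounitL A f = (\<Sum>a\<in>qbasis A. f a * qcounit A a)"

definition qantipodeL :: "'b qhalg \<Rightarrow> ('b \<Rightarrow> complex) \<Rightarrow> 'b \<Rightarrow> complex" where
  "qantipodeL A f = (\<lambda>c. \<Sum>a\<in>qbasis A. f a * qantipode A a c)"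

definition linmap :: "'b set \<Rightarrow> ('b \<Rightarrow> 'c \<Rightarrow> complex) \<Rightarrow> ('b \<Rightarrow> complex) \<Rightarrow> 'c \<Rightarrow> complex" where
  "linmap B M f = (\<lambda>c. \<Sum>b\<in>B. f b * M b c)"

definition linmap2 :: "'b set \<Rightarrow> ('b \<Rightarrow> 'c \<Rightarrow> complex) \<Rightarrow> ('b \<times> 'b \<Rightarrow> complex) \<Rightarrow> 'c \<times> 'c \<Rightarrow> complex" where
  "linmap2 B M t = (\<lambda>(c, c'). \<Sum>b\<in>B. \<Sum>b'\<in>B. t (b, b') * M b c * M b' c')"

definition linmap3 :: "'b set \<Rightarrow> ('b \<Rightarrow> 'c \<Rightarrow> complex) \<Rightarrow> ('b \<times> 'b \<times> 'b \<Rightarrow> complex) \<Rightarrow> 'c \<times> 'c \<times> 'c \<Rightarrow> complex" where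
  "linmap3 B M t = (\<lambda>(c, c', c''). \<Sum>b\<in>B. \<Sum>b'\<in>B. \<Sum>b''\<in>B.
       t (b, b', b'') * M b c * M b' c' * M b'' c'')"

definition qh_iso :: "'b qhalg \<Rightarrow> 'c qhalg \<Rightarrow> ('b \<Rightarrow> 'c \<Rightarrow> complex) \<Rightarrow> bool" where
  "qh_iso A1 A2 M \<longleftrightarrow>
     (let B = qbasis A1; F = linmap B M in
      finite (qbasis A1) \<and> finite (qbasis A2) \<and>
      bij_betw F (qvecs A1) (qvecs A2) \<and>
      (\<forall>b\<in>B. \<forall>b'\<in>B. F (qmult A1 b b') = qmulL A2 (M b) (M b')) \<and>
      F (qunit A1) = qunit A2 \<and>
      (\<forall>b\<in>B. linmap2 B M (qcomult A1 b) = qcomulL A2 (M b)) \<and>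
      linmap3 B M (qassoc A1) = qassoc A2 \<and>
      (\<forall>b\<in>B. qcounitL A2 (M b) = qcounit A1 b) \<and>
      (\<forall>b\<in>B. F (qantipode A1 b) = qantipodeL A2 (M b)) \<and>
      F (qalpha A1) = qalpha A2 \<and>
      F (qbeta A1) = qbeta A2)"

text \<open>Quotient group G/N is the HOL-Algebra group G Mod N (right cosets).\<close>
definition qbar :: "('a, 'm) monoid_scheme \<Rightarrow> 'a set \<Rightarrow> 'a \<Rightarrow> 'a set" where
  "qbar G N x = N #>\<^bsub>G\<^esub> x"

definition qconj :: "('a, 'm) monoid_scheme \<Rightarrow> 'a set \<Rightarrow> 'a set \<Rightarrow> 'a set \<Rightarrow> 'a set" where
  "qconj G N g x = inv\<^bsub>G Mod N\<^esub> x \<otimes>\<^bsub>G Mod N\<^esub> g \<otimes>\<^bsub>G Mod N\<^esub> x"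

definition normalized_3cocycle :: "('g, 'n) monoid_scheme \<Rightarrow> ('g \<Rightarrow> 'g \<Rightarrow> 'g \<Rightarrow> complex) \<Rightarrow> bool" where
  "normalized_3cocycle H \<omega> \<longleftrightarrow>
     (\<forall>a\<in>carrier H. \<forall>b\<in>carrier H. \<forall>c\<in>carrier H. \<omega> a b c \<noteq> 0) \<and>
     (\<forall>a\<in>carrier H. \<forall>b\<in>carrier H. \<forall>c\<in>carrier H. \<forall>d\<in>carrier H.
        \<omega> b c d * \<omega> a (b \<otimes>\<^bsub>H\<^esub> c) d * \<omega> a b c
        = \<omega> (a \<otimes>\<^bsub>H\<^esub> b) c d * \<omega> a b (c \<otimes>\<^bsub>H\<^esub> d)) \<and>
     (\<forall>a\<in>carrier H. \<forall>b\<in>carrier H. \<forall>c\<in>carrier H.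
        (a = \<one>\<^bsub>H\<^esub> \<or> b = \<one>\<^bsub>H\<^esub> \<or> c = \<one>\<^bsub>H\<^esub>) \<longrightarrow> \<omega> a b c = 1)"

definition qtheta :: "('a, 'm) monoid_scheme \<Rightarrow> 'a set \<Rightarrow> ('a set \<Rightarrow> 'a set \<Rightarrow> 'a set \<Rightarrow> complex)
    \<Rightarrow> 'a set \<Rightarrow> 'a set \<Rightarrow> 'a set \<Rightarrow> complex" where
  "qtheta G N \<omega> g x y =
     \<omega> g x y * \<omega> x y (qconj G N g (x \<otimes>\<^bsub>G Mod N\<^esub> y)) / \<omega> x g (qconj G N y g)"

definition qgamma :: "('a, 'm) monoid_scheme \<Rightarrow> 'a set \<Rightarrow> ('a set \<Rightarrow> 'a set \<Rightarrow> 'a set \<Rightarrow> complex)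
    \<Rightarrow> 'a set \<Rightarrow> 'a set \<Rightarrow> 'a set \<Rightarrow> complex" where
  "qgamma G N \<omega> g x y =
     \<omega> x y g * \<omega> g (qconj G N x g) (qconj G N y g) / \<omega> x g (qconj G N y g)"

definition qsigma :: "('a, 'm) monoid_scheme \<Rightarrow> 'a set \<Rightarrow> ('a set \<Rightarrow> 'a) \<Rightarrow> 'a set \<Rightarrow> 'a set \<Rightarrow> 'a" where
  "qsigma G N s x y = s x \<otimes>\<^bsub>G\<^esub> s y \<otimes>\<^bsub>G\<^esub> inv\<^bsub>G\<^esub> (s (x \<otimes>\<^bsub>G Mod N\<^esub> y))"

section \<open>D^omega(G,N): basis element (g,x) stands for e(g) bowtie x\<close>

definition Dw :: "('a, 'm) monoid_scheme \<Rightarrow> 'a set \<Rightarrow> ('a set \<Rightarrow> 'a set \<Rightarrow> 'a set \<Rightarrow> complex)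
    \<Rightarrow> ('a set \<times> 'a) qhalg" where
  "Dw G N \<omega> = \<lparr>
     qbasis = carrier (G Mod N) \<times> carrier G,
     qmult = (\<lambda>(g, x) (h, y) c.
        if qconj G N g (qbar G N x) = h \<and> c = (g, x \<otimes>\<^bsub>G\<^esub> y)
        then qtheta G N \<omega> g (qbar G N x) (qbar G N y) else 0),
     qunit = (\<lambda>(g, x). if g \<in> carrier (G Mod N) \<and> x = \<one>\<^bsub>G\<^esub> then 1 else 0),
     qcomult = (\<lambda>(g, x) ((a, x1), (b, x2)).
        if x1 = x \<and> x2 = x \<and> a \<in> carrier (G Mod N) \<and> b \<in> carrier (G Mod N)
           \<and> a \<otimes>\<^bsub>G Mod N\<^esub> b = g
        then qgamma G N \<omega> (qbar G N x) a b else 0),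
     qassoc = (\<lambda>((g, x), (h, y), (k, z)).
        if g \<in> carrier (G Mod N) \<and> h \<in> carrier (G Mod N) \<and> k \<in> carrier (G Mod N)
           \<and> x = \<one>\<^bsub>G\<^esub> \<and> y = \<one>\<^bsub>G\<^esub> \<and> z = \<one>\<^bsub>G\<^esub>
        then 1 / \<omega> g h k else 0),
     qcounit = (\<lambda>(g, x). if g = \<one>\<^bsub>G Mod N\<^esub> then 1 else 0),
     qantipode = (\<lambda>(g, x) c.
        if c = (qconj G N (inv\<^bsub>G Mod N\<^esub> g) (qbar G N x), inv\<^bsub>G\<^esub> x)
        then qtheta G N \<omega> (inv\<^bsub>G Mod N\<^esub> g) (qbar G N x) (inv\<^bsub>G Mod N\<^esub> (qbar G N x))
             / qgamma G N \<omega> (qbar G N x) g (inv\<^bsub>G Mod N\<^esub> g)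
        else 0),
     qalpha = (\<lambda>(g, x). if g \<in> carrier (G Mod N) \<and> x = \<one>\<^bsub>G\<^esub> then 1 else 0),
     qbeta = (\<lambda>(g, x). if g \<in> carrier (G Mod N) \<and> x = \<one>\<^bsub>G\<^esub>
        then \<omega> g (inv\<^bsub>G Mod N\<^esub> g) g else 0) \<rparr>"

section \<open>C[N] #_sigma D^omega(G/N): basis element (m,g,x) stands for m # (e(g) bowtie x)\<close>

definition Smash :: "('a, 'm) monoid_scheme \<Rightarrow> 'a set \<Rightarrow> ('a set \<Rightarrow> 'a set \<Rightarrow> 'a set \<Rightarrow> complex)
    \<Rightarrow> ('a set \<Rightarrow> 'a) \<Rightarrow> ('a \<times> 'a set \<times> 'a set) qhalg" where
  "Smash G N \<omega> s = \<lparr>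
     qbasis = N \<times> carrier (G Mod N) \<times> carrier (G Mod N),
     qmult = (\<lambda>(m, g, x) (n, h, y) c.
        if qconj G N g x = h
           \<and> c = (m \<otimes>\<^bsub>G\<^esub> n \<otimes>\<^bsub>G\<^esub> qsigma G N s x y, g, x \<otimes>\<^bsub>G Mod N\<^esub> y)
        then qtheta G N \<omega> g x y else 0),
     qunit = (\<lambda>(m, g, x). if m = \<one>\<^bsub>G\<^esub> \<and> g \<in> carrier (G Mod N) \<and> x = \<one>\<^bsub>G Mod N\<^esub>
        then 1 else 0),
     qcomult = (\<lambda>(m, g, x) ((m1, a, x1), (m2, b, x2)).
        if m1 = m \<and> m2 = m \<and> x1 = x \<and> x2 = x
           \<and> a \<in> carrier (G Mod N) \<and> b \<in> carrier (G Mod N) \<and> a \<otimes>\<^bsub>G Mod N\<^esub> b = g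
        then qgamma G N \<omega> x a b else 0),
     qassoc = (\<lambda>((m1, g, x), (m2, h, y), (m3, k, z)).
        if m1 = \<one>\<^bsub>G\<^esub> \<and> m2 = \<one>\<^bsub>G\<^esub> \<and> m3 = \<one>\<^bsub>G\<^esub>
           \<and> g \<in> carrier (G Mod N) \<and> h \<in> carrier (G Mod N) \<and> k \<in> carrier (G Mod N)
           \<and> x = \<one>\<^bsub>G Mod N\<^esub> \<and> y = \<one>\<^bsub>G Mod N\<^esub> \<and> z = \<one>\<^bsub>G Mod N\<^esub>
        then 1 / \<omega> g h k else 0),
     qcounit = (\<lambda>(m, g, x). if g = \<one>\<^bsub>G Mod N\<^esub> then 1 else 0),
     qantipode = (\<lambda>(m, g, x) c.
        if c = (inv\<^bsub>G\<^esub> m \<otimes>\<^bsub>G\<^esub> inv\<^bsub>G\<^esub> (qsigma G N s x (inv\<^bsub>G Mod N\<^esub> x)),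
                qconj G N (inv\<^bsub>G Mod N\<^esub> g) x, inv\<^bsub>G Mod N\<^esub> x)
        then qtheta G N \<omega> (inv\<^bsub>G Mod N\<^esub> g) x (inv\<^bsub>G Mod N\<^esub> x)
             / qgamma G N \<omega> x g (inv\<^bsub>G Mod N\<^esub> g)
        else 0),
     qalpha = (\<lambda>(m, g, x). if m = \<one>\<^bsub>G\<^esub> \<and> g \<in> carrier (G Mod N) \<and> x = \<one>\<^bsub>G Mod N\<^esub>
        then 1 else 0),
     qbeta = (\<lambda>(m, g, x). if m = \<one>\<^bsub>G\<^esub> \<and> g \<in> carrier (G Mod N) \<and> x = \<one>\<^bsub>G Mod N\<^esub>
        then \<omega> g (inv\<^bsub>G Mod N\<^esub> g) g else 0) \<rparr>"

end

theory Submission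
  imports Defs
begin

definition ind :: "('b \<Rightarrow> 'c) \<Rightarrow> 'b \<Rightarrow> 'c \<Rightarrow> complex" where
  "ind \<phi> = (\<lambda>b c. if c = \<phi> b then 1 else 0)"

lemma sum_inj_delta:
  assumes "finite B" "inj_on \<phi> B" "b0 \<in> B"
  shows "(\<Sum>b\<in>B. f b * (if \<phi> b0 = \<phi> b then 1 else 0)) = (f b0 :: complex)"
proof -
  have "(\<Sum>b\<in>B. f b * (if \<phi> b0 = \<phi> b then 1 else 0)) = (\<Sum>b\<in>B. if b = b0 then f b else 0)"
    using assms by (intro sum.cong) (auto dest: inj_onD)
  also have "\<dots> = f b0" using assms by simp
  finally show ?thesis .
qed

lemma lin_eq:
  fixes \<phi> :: "'b \<Rightarrow> 'c"
  assumes "finite B" "inj_on \<phi> B" "\<phi> ` B = B'" "\<forall>b\<in>B. v b = w (\<phi> b)" "\<forall>c. c \<notin> B' \<longrightarrow> w c = 0"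
  shows "linmap B (ind \<phi>) v = w"
proof
  fix c :: 'c
  show "linmap B (ind \<phi>) v c = w c"
  proof (cases "c \<in> B'")
    case True
    then obtain b0 where b0: "b0 \<in> B" "c = \<phi> b0" using assms(3) by blast
    show ?thesis unfolding linmap_def ind_def b0(2)
      using sum_inj_delta[OF assms(1,2) b0(1), of v] assms(4) b0 by simp
  next
    case False
    then have "\<forall>b\<in>B. c \<noteq> \<phi> b" using assms(3) by blast
    then show ?thesis using False assms(5) unfolding linmap_def ind_def by simp
  qed
qed

lemma lin2_eq:
  fixes \<phi> :: "'b \<Rightarrow> 'c"
  assumes "finite B" "inj_on \<phi> B" "\<phi> ` B = B'" "\<forall>b\<in>B. \<forall>b'\<in>B. v (b, b') = w (\<phi> b, \<phi> b')"
    "\<forall>c c'. c \<notin> B' \<or> c' \<notin> B' \<longrightarrow> w (c, c') = 0"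
  shows "linmap2 B (ind \<phi>) v = w"
proof
  fix p :: "'c \<times> 'c"
  obtain c c' where p: "p = (c, c')" by fastforce
  show "linmap2 B (ind \<phi>) v p = w p"
  proof (cases "c \<in> B' \<and> c' \<in> B'")
    case True
    then obtain b0 b1 where b: "b0 \<in> B" "c = \<phi> b0" "b1 \<in> B" "c' = \<phi> b1" using assms(3) by blast
    have "linmap2 B (ind \<phi>) v p = (\<Sum>b\<in>B. \<Sum>b'\<in>B. v (b, b') * (if \<phi> b0 = \<phi> b then 1 else 0) * (if \<phi> b1 = \<phi> b' then 1 else 0))"
      unfolding linmap2_def ind_def p b by simp
    also have "\<dots> = (\<Sum>b\<in>B. (\<Sum>b'\<in>B. v (b, b') * (if \<phi> b1 = \<phi> b' then 1 else 0)) * (if \<phi> b0 = \<phi> b then 1 else 0))"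
      by (simp add: sum_distrib_left mult_ac)
    also have "\<dots> = (\<Sum>b\<in>B. v (b, b1) * (if \<phi> b0 = \<phi> b then 1 else 0))"
      using sum_inj_delta[OF assms(1,2) b(3)] by simp
    also have "\<dots> = v (b0, b1)" using sum_inj_delta[OF assms(1,2) b(1)] by simp
    finally show ?thesis using assms(4) b p by simp
  next
    case False
    then have "(\<forall>b\<in>B. c \<noteq> \<phi> b) \<or> (\<forall>b\<in>B. c' \<noteq> \<phi> b)" using assms(3) by blast
    then show ?thesis using False assms(5) unfolding linmap2_def ind_def p by auto
  qed
qed

lemma lin3_eq:
  fixes \<phi> :: "'b \<Rightarrow> 'c"
  assumes "finite B" "inj_on \<phi> B" "\<phi> ` B = B'"
    "\<forall>b\<in>B. \<forall>b'\<in>B. \<forall>b''\<in>B. v (b, b', b'') = w (\<phi> b, \<phi> b', \<phi> b'')"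
    "\<forall>c c' c''. c \<notin> B' \<or> c' \<notin> B' \<or> c'' \<notin> B' \<longrightarrow> w (c, c', c'') = 0"
  shows "linmap3 B (ind \<phi>) v = w"
proof
  fix p :: "'c \<times> 'c \<times> 'c"
  obtain c c' c'' where p: "p = (c, c', c'')" by (cases p) fastforce
  show "linmap3 B (ind \<phi>) v p = w p"
  proof (cases "c \<in> B' \<and> c' \<in> B' \<and> c'' \<in> B'")
    case True
    then obtain b0 b1 b2 where b: "b0 \<in> B" "c = \<phi> b0" "b1 \<in> B" "c' = \<phi> b1" "b2 \<in> B" "c'' = \<phi> b2"
      using assms(3) by blast
    have "linmap3 B (ind \<phi>) v p = (\<Sum>b\<in>B. \<Sum>b'\<in>B. \<Sum>b''\<in>B. v (b, b', b'') * (if \<phi> b0 = \<phi> b then 1 else 0) * (if \<phi> b1 = \<phi> b' then 1 else 0) * (if \<phi> b2 = \<phi> b'' then 1 else 0))"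
      unfolding linmap3_def ind_def p b by simp
    also have "\<dots> = (\<Sum>b\<in>B. (\<Sum>b'\<in>B. (\<Sum>b''\<in>B. v (b, b', b'') * (if \<phi> b2 = \<phi> b'' then 1 else 0)) * (if \<phi> b1 = \<phi> b' then 1 else 0)) * (if \<phi> b0 = \<phi> b then 1 else 0))"
      by (simp add: sum_distrib_left mult_ac)
    also have "\<dots> = (\<Sum>b\<in>B. (\<Sum>b'\<in>B. v (b, b', b2) * (if \<phi> b1 = \<phi> b' then 1 else 0)) * (if \<phi> b0 = \<phi> b then 1 else 0))"
      using sum_inj_delta[OF assms(1,2) b(5)] by simp
    also have "\<dots> = (\<Sum>b\<in>B. v (b, b1, b2) * (if \<phi> b0 = \<phi> b then 1 else 0))"
      using sum_inj_delta[OF assms(1,2) b(3)] by simp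
    also have "\<dots> = v (b0, b1, b2)" using sum_inj_delta[OF assms(1,2) b(1)] by simp
    finally show ?thesis using assms(4) b p by simp
  next
    case False
    then have "(\<forall>b\<in>B. c \<noteq> \<phi> b) \<or> (\<forall>b\<in>B. c' \<noteq> \<phi> b) \<or> (\<forall>b\<in>B. c'' \<noteq> \<phi> b)" using assms(3) by blast
    then show ?thesis using False assms(5) unfolding linmap3_def ind_def p by auto
  qed
qed

lemma lin_bij:
  fixes \<phi> :: "'b \<Rightarrow> 'c"
  assumes "finite B" "inj_on \<phi> B" "\<phi> ` B = B'"
  shows "bij_betw (linmap B (ind \<phi>)) {f::'b\<Rightarrow>complex. \<forall>b. b \<notin> B \<longrightarrow> f b = 0} {f::'c\<Rightarrow>complex. \<forall>b. b \<notin> B' \<longrightarrow> f b = 0}"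
proof -
  let ?F = "linmap B (ind \<phi>)"
  have at: "?F f (\<phi> b) = f b" if "b \<in> B" for f b
    unfolding linmap_def ind_def using sum_inj_delta[OF assms(1,2) that, of f] by simp
  have out: "?F f c = 0" if "c \<notin> B'" for f c
    using that assms(3) unfolding linmap_def ind_def by (auto intro!: sum.neutral)
  show ?thesis
  proof (rule bij_betwI')
    fix f g :: "'b \<Rightarrow> complex" assume f: "f \<in> {f. \<forall>b. b \<notin> B \<longrightarrow> f b = 0}" and g: "g \<in> {f. \<forall>b. b \<notin> B \<longrightarrow> f b = 0}"
    show "(?F f = ?F g) = (f = g)"
    proof
      assume e: "?F f = ?F g"
      show "f = g"
      proof
        fix b show "f b = g b" using f g at[of b f] at[of b g] e by (cases "b \<in> B") auto
      qed
    qed simp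
  next
    fix f :: "'b \<Rightarrow> complex" show "?F f \<in> {f. \<forall>b. b \<notin> B' \<longrightarrow> f b = 0}" using out by simp
  next
    fix h :: "'c \<Rightarrow> complex" assume h: "h \<in> {f. \<forall>b. b \<notin> B' \<longrightarrow> f b = 0}"
    let ?f = "\<lambda>b. if b \<in> B then h (\<phi> b) else 0"
    have "?F ?f = h"
      using lin_eq[OF assms, of ?f h] h by simp
    then show "\<exists>f\<in>{f. \<forall>b. b \<notin> B \<longrightarrow> f b = 0}. h = ?F f" by (intro bexI[of _ ?f]) auto
  qed
qed

lemma delta_sum: "finite S \<Longrightarrow> p \<in> S \<Longrightarrow> (\<Sum>a\<in>S. (if a = p then 1 else 0) * f a) = (f p :: complex)"
proof -
  assume "finite S" "p \<in> S"
  have "(\<Sum>a\<in>S. (if a = p then 1 else 0) * f a) = (\<Sum>a\<in>S. if a = p then f a else 0)"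
    by (intro sum.cong) auto
  then show ?thesis using \<open>finite S\<close> \<open>p \<in> S\<close> by simp
qed

lemma delta_sum': "finite S \<Longrightarrow> p \<in> S \<Longrightarrow> (\<Sum>a\<in>S. f a * (if a = p then 1 else 0)) = (f p :: complex)"
  using delta_sum[of S p f] by (simp add: mult.commute)

lemma qmulL_ind: "finite (qbasis A) \<Longrightarrow> p \<in> qbasis A \<Longrightarrow> q \<in> qbasis A \<Longrightarrow>
   qmulL A (\<lambda>a. if a = p then 1 else 0) (\<lambda>a. if a = q then 1 else 0) = qmult A p q"
proof
  fix c assume f: "finite (qbasis A)" and p: "p \<in> qbasis A" and q: "q \<in> qbasis A"
  have "qmulL A (\<lambda>a. if a = p then 1 else 0) (\<lambda>a. if a = q then 1 else 0) c
     = (\<Sum>a\<in>qbasis A. (if a = p then 1 else 0) * (\<Sum>a'\<in>qbasis A. (if a' = q then 1 else 0) * qmult A a a' c))"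
    unfolding qmulL_def by (simp add: sum_distrib_left mult_ac)
  also have "\<dots> = qmult A p q c" using delta_sum[OF f p] delta_sum[OF f q] by simp
  finally show "qmulL A (\<lambda>a. if a = p then 1 else 0) (\<lambda>a. if a = q then 1 else 0) c = qmult A p q c" .
qed

lemma qcomulL_ind: "finite (qbasis A) \<Longrightarrow> p \<in> qbasis A \<Longrightarrow>
   qcomulL A (\<lambda>a. if a = p then 1 else 0) = qcomult A p"
  unfolding qcomulL_def using delta_sum by fastforce

lemma qcounitL_ind: "finite (qbasis A) \<Longrightarrow> p \<in> qbasis A \<Longrightarrow>
   qcounitL A (\<lambda>a. if a = p then 1 else 0) = qcounit A p"
  unfolding qcounitL_def using delta_sum by fastforce

lemma qantipodeL_ind: "finite (qbasis A) \<Longrightarrow> p \<in> qbasis A \<Longrightarrow>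
   qantipodeL A (\<lambda>a. if a = p then 1 else 0) = qantipode A p"
  unfolding qantipodeL_def using delta_sum by fastforce

locale L22 = normal +
  fixes s :: "'a set \<Rightarrow> 'a"
  assumes central: "\<forall>n\<in>H. \<forall>g\<in>carrier G. n \<otimes>\<^bsub>G\<^esub> g = g \<otimes>\<^bsub>G\<^esub> n"
    and sin: "\<forall>a\<in>carrier (G Mod H). s a \<in> a"
    and s1: "s \<one>\<^bsub>G Mod H\<^esub> = \<one>\<^bsub>G\<^esub>"
begin

lemma Q: "group (G Mod H)" by (rule factorgroup_is_group)

lemma NG: "H \<subseteq> carrier G" by (rule subset)
lemma Nc: "n \<in> H \<Longrightarrow> n \<in> carrier G" using NG by blast

lemma cen: "n \<in> H \<Longrightarrow> g \<in> carrier G \<Longrightarrow> n \<otimes> g = g \<otimes> n" using central by blast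

lemma carrQ: "carrier (G Mod H) = rcosets H" by (simp add: FactGroup_def)

lemma s_carr: "x \<in> carrier (G Mod H) \<Longrightarrow> s x \<in> carrier G"
  using sin carrQ rcosets_carrier[OF is_group] by blast

lemma x_eq: "x \<in> carrier (G Mod H) \<Longrightarrow> x = H #> s x"
proof -
  assume x: "x \<in> carrier (G Mod H)"
  then obtain a where a: "a \<in> carrier G" "x = H #> a" by (auto simp: carrQ RCOSETS_def)
  have "s x \<in> H #> a" using sin x a by blast
  then show ?thesis using repr_independence[OF _ a(1) subgroup_axioms] a by simp
qed

lemma qbar_ms: "m \<in> H \<Longrightarrow> x \<in> carrier (G Mod H) \<Longrightarrow> qbar G H (m \<otimes> s x) = x"
  unfolding qbar_def
  by (metis Nc s_carr coset_mult_assoc[OF NG] rcos_const[OF is_group] x_eq)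

lemma qbar_carr: "y \<in> carrier G \<Longrightarrow> qbar G H y \<in> carrier (G Mod H)"
  unfolding qbar_def carrQ by (rule rcosetsI[OF NG])

lemma qbar_N: "y \<in> carrier G \<Longrightarrow> y \<otimes> inv (s (qbar G H y)) \<in> H"
proof -
  assume y: "y \<in> carrier G"
  have "s (qbar G H y) \<in> H #> y" using sin qbar_carr[OF y] unfolding qbar_def by blast
  then have "H #> y = H #> s (qbar G H y)" using repr_independence[OF _ y subgroup_axioms] by simp
  then have "y \<in> H #> s (qbar G H y)" using rcos_self[OF y subgroup_axioms] by simp
  then show ?thesis using rcos_module_imp[OF is_group s_carr[OF qbar_carr[OF y]]] by blast
qed

lemma mulQ: "x \<in> carrier (G Mod H) \<Longrightarrow> y \<in> carrier (G Mod H) \<Longrightarrow> x \<otimes>\<^bsub>G Mod H\<^esub> y = H #> (s x \<otimes> s y)"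
  by (metis mult_FactGroup rcos_sum s_carr x_eq)

lemma sigma_N: "x \<in> carrier (G Mod H) \<Longrightarrow> y \<in> carrier (G Mod H) \<Longrightarrow> qsigma G H s x y \<in> H"
proof -
  assume x: "x \<in> carrier (G Mod H)" and y: "y \<in> carrier (G Mod H)"
  have xy: "x \<otimes>\<^bsub>G Mod H\<^esub> y \<in> carrier (G Mod H)" using monoid.m_closed[OF group.is_monoid[OF Q] x y] .
  have c: "s x \<otimes> s y \<in> carrier G" using s_carr x y by simp
  have "s (x \<otimes>\<^bsub>G Mod H\<^esub> y) \<in> H #> (s x \<otimes> s y)" using sin xy mulQ[OF x y] by metis
  then have "s (x \<otimes>\<^bsub>G Mod H\<^esub> y) \<otimes> inv (s x \<otimes> s y) \<in> H"
    using rcos_module_imp[OF is_group c] by blast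
  then have "inv (s (x \<otimes>\<^bsub>G Mod H\<^esub> y) \<otimes> inv (s x \<otimes> s y)) \<in> H" by simp
  then show ?thesis unfolding qsigma_def using s_carr[OF xy] c
    by (simp add: inv_mult_group)
qed

lemma closQ: "x \<in> carrier (G Mod H) \<Longrightarrow> y \<in> carrier (G Mod H) \<Longrightarrow> x \<otimes>\<^bsub>G Mod H\<^esub> y \<in> carrier (G Mod H)"
  using monoid.m_closed[OF group.is_monoid[OF Q]] by blast

lemma invQ: "x \<in> carrier (G Mod H) \<Longrightarrow> inv\<^bsub>G Mod H\<^esub> x \<in> carrier (G Mod H)"
  using group.inv_closed[OF Q] by blast

lemma oneQ: "\<one>\<^bsub>G Mod H\<^esub> \<in> carrier (G Mod H)"
  using monoid.one_closed[OF group.is_monoid[OF Q]] by blast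

lemma conjQ: "a \<in> carrier (G Mod H) \<Longrightarrow> b \<in> carrier (G Mod H) \<Longrightarrow> qconj G H a b \<in> carrier (G Mod H)"
  unfolding qconj_def using closQ invQ by blast

lemma ms_inj: assumes "m \<in> H" "m' \<in> H" "x \<in> carrier (G Mod H)" "x' \<in> carrier (G Mod H)"
  shows "m \<otimes> s x = m' \<otimes> s x' \<longleftrightarrow> m = m' \<and> x = x'"
proof
  assume e: "m \<otimes> s x = m' \<otimes> s x'"
  have xx: "x = x'" using qbar_ms[OF assms(1,3)] qbar_ms[OF assms(2,4)] e by simp
  moreover have "m = m'" using e r_cancel[of "s x" m m'] assms s_carr Nc xx by simp
  ultimately show "m = m' \<and> x = x'" by simp
qed simp

lemma ms_one: assumes "m \<in> H" "x \<in> carrier (G Mod H)"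
  shows "m \<otimes> s x = \<one> \<longleftrightarrow> m = \<one> \<and> x = \<one>\<^bsub>G Mod H\<^esub>"
  using ms_inj[OF assms(1) subgroup.one_closed[OF subgroup_axioms] assms(2) oneQ] s1 by simp

lemma key_mult: assumes "m \<in> H" "n \<in> H" "x \<in> carrier (G Mod H)" "y \<in> carrier (G Mod H)"
  shows "m \<otimes> n \<otimes> qsigma G H s x y \<otimes> s (x \<otimes>\<^bsub>G Mod H\<^esub> y) = m \<otimes> s x \<otimes> (n \<otimes> s y)"
proof -
  have c: "m \<in> carrier G" "n \<in> carrier G" "s x \<in> carrier G" "s y \<in> carrier G"
    "s (x \<otimes>\<^bsub>G Mod H\<^esub> y) \<in> carrier G"
    using assms Nc s_carr closQ by auto
  have "m \<otimes> n \<otimes> qsigma G H s x y \<otimes> s (x \<otimes>\<^bsub>G Mod H\<^esub> y) = m \<otimes> (n \<otimes> s x) \<otimes> s y"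
    unfolding qsigma_def using c by (simp add: m_assoc)
  also have "\<dots> = m \<otimes> s x \<otimes> (n \<otimes> s y)" using cen[OF assms(2) c(3)] c by (simp add: m_assoc)
  finally show ?thesis .
qed

lemma key_anti: assumes "m \<in> H" "x \<in> carrier (G Mod H)"
  shows "inv m \<otimes> inv (qsigma G H s x (inv\<^bsub>G Mod H\<^esub> x)) \<otimes> s (inv\<^bsub>G Mod H\<^esub> x) = inv (m \<otimes> s x)"
proof -
  let ?x' = "inv\<^bsub>G Mod H\<^esub> x"
  let ?\<sigma> = "qsigma G H s x ?x'"
  have x': "?x' \<in> carrier (G Mod H)" using invQ assms by blast
  have sN: "?\<sigma> \<in> H" using sigma_N[OF assms(2) x'] .
  have c: "m \<in> carrier G" "s x \<in> carrier G" "s ?x' \<in> carrier G" "?\<sigma> \<in> carrier G"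
    using assms Nc s_carr x' sN by auto
  have "x \<otimes>\<^bsub>G Mod H\<^esub> ?x' = \<one>\<^bsub>G Mod H\<^esub>" using group.r_inv[OF Q assms(2)] .
  then have sig: "?\<sigma> = s x \<otimes> s ?x'" unfolding qsigma_def using s1 c by simp
  then have sx': "s ?x' = inv (s x) \<otimes> ?\<sigma>" using c inv_solve_left by auto
  have isN: "inv ?\<sigma> \<in> H" using sN by simp
  have "inv ?\<sigma> \<otimes> s ?x' = inv ?\<sigma> \<otimes> inv (s x) \<otimes> ?\<sigma>" using sx' c by (simp add: m_assoc)
  also have "\<dots> = inv (s x) \<otimes> inv ?\<sigma> \<otimes> ?\<sigma>" using cen[OF isN, of "inv (s x)"] c by simp
  also have "\<dots> = inv (s x)" using c by (simp add: m_assoc)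
  finally have e: "inv ?\<sigma> \<otimes> s ?x' = inv (s x)" .
  have "inv m \<otimes> inv ?\<sigma> \<otimes> s ?x' = inv m \<otimes> inv (s x)" using e c by (simp add: m_assoc)
  also have "\<dots> = inv (s x) \<otimes> inv m" using cen[of "inv m" "inv (s x)"] assms c by simp
  also have "\<dots> = inv (m \<otimes> s x)" using c by (simp add: inv_mult_group)
  finally show ?thesis .
qed

definition phi :: "'a \<times> 'a set \<times> 'a set \<Rightarrow> 'a set \<times> 'a" where
  "phi = (\<lambda>(m, g, x). (g, m \<otimes> s x))"

lemma phi_inj: "inj_on phi (H \<times> carrier (G Mod H) \<times> carrier (G Mod H))"
  unfolding inj_on_def phi_def using ms_inj by auto

lemma phi_img: "phi ` (H \<times> carrier (G Mod H) \<times> carrier (G Mod H)) = carrier (G Mod H) \<times> carrier G"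
proof
  show "phi ` (H \<times> carrier (G Mod H) \<times> carrier (G Mod H)) \<subseteq> carrier (G Mod H) \<times> carrier G"
    unfolding phi_def using Nc s_carr by auto
next
  show "carrier (G Mod H) \<times> carrier G \<subseteq> phi ` (H \<times> carrier (G Mod H) \<times> carrier (G Mod H))"
  proof
    fix c assume "c \<in> carrier (G Mod H) \<times> carrier G"
    then obtain g y where c: "c = (g, y)" "g \<in> carrier (G Mod H)" "y \<in> carrier G" by blast
    let ?b = "(y \<otimes> inv (s (qbar G H y)), g, qbar G H y)"
    have sc: "s (qbar G H y) \<in> carrier G" using s_carr qbar_carr c by blast
    have "phi ?b = c" unfolding phi_def using c sc by (simp add: m_assoc)
    moreover have "?b \<in> H \<times> carrier (G Mod H) \<times> carrier (G Mod H)" using qbar_N qbar_carr c by blast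
    ultimately show "c \<in> phi ` (H \<times> carrier (G Mod H) \<times> carrier (G Mod H))" by force
  qed
qed

lemma finQ: "finite (carrier G) \<Longrightarrow> finite (carrier (G Mod H))"
proof -
  assume f: "finite (carrier G)"
  have "carrier (G Mod H) \<subseteq> Pow (carrier G)" using rcosets_carrier[OF is_group] carrQ by blast
  then show ?thesis using f finite_subset by blast
qed

lemma finB: "finite (carrier G) \<Longrightarrow> finite (H \<times> carrier (G Mod H) \<times> carrier (G Mod H))"
  using finQ finite_subset[OF NG] by blast

lemma SB: "qbasis (Smash G H \<omega> s) = H \<times> carrier (G Mod H) \<times> carrier (G Mod H)" by (simp add: Smash_def)
lemma DB: "qbasis (Dw G H \<omega>) = carrier (G Mod H) \<times> carrier G" by (simp add: Dw_def)

lemma Hm: "a \<in> H \<Longrightarrow> b \<in> H \<Longrightarrow> a \<otimes> b \<in> H" using subgroup.m_closed[OF subgroup_axioms] by blast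
lemma Hi: "a \<in> H \<Longrightarrow> inv a \<in> H" using subgroup.m_inv_closed[OF subgroup_axioms] by blast

lemma mult_ok:
  assumes fin: "finite (carrier G)"
    and b: "b \<in> H \<times> carrier (G Mod H) \<times> carrier (G Mod H)" and b': "b' \<in> H \<times> carrier (G Mod H) \<times> carrier (G Mod H)"
  shows "linmap (H \<times> carrier (G Mod H) \<times> carrier (G Mod H)) (ind phi) (qmult (Smash G H \<omega> s) b b')
       = qmulL (Dw G H \<omega>) (ind phi b) (ind phi b')"
proof -
  let ?B = "H \<times> carrier (G Mod H) \<times> carrier (G Mod H)"
  obtain m g x where bb: "b = (m, g, x)" "m \<in> H" "g \<in> carrier (G Mod H)" "x \<in> carrier (G Mod H)" using b by auto
  obtain n h y where bb': "b' = (n, h, y)" "n \<in> H" "h \<in> carrier (G Mod H)" "y \<in> carrier (G Mod H)" using b' by auto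
  have pb: "phi b \<in> qbasis (Dw G H \<omega>)" "phi b' \<in> qbasis (Dw G H \<omega>)" using phi_img b b' DB by auto
  have fD: "finite (qbasis (Dw G H \<omega>))" using DB finQ fin by simp
  have rhs: "qmulL (Dw G H \<omega>) (ind phi b) (ind phi b') = qmult (Dw G H \<omega>) (phi b) (phi b')"
    using qmulL_ind[OF fD pb] unfolding ind_def by simp
  define p where "p = (m \<otimes> n \<otimes> qsigma G H s x y, g, x \<otimes>\<^bsub>G Mod H\<^esub> y)"
  have pB: "p \<in> ?B" unfolding p_def using Hm sigma_N bb bb' closQ by auto
  have php: "phi p = (g, m \<otimes> s x \<otimes> (n \<otimes> s y))"
    using key_mult[OF bb(2) bb'(2) bb(4) bb'(4)] by (simp add: phi_def p_def)
  have cB: "m \<otimes> s x \<otimes> (n \<otimes> s y) \<in> carrier G" using bb bb' Nc s_carr by simp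
  have phb: "phi b = (g, m \<otimes> s x)" "phi b' = (h, n \<otimes> s y)" by (simp_all add: phi_def bb bb')
  show ?thesis unfolding rhs
  proof (rule lin_eq[OF finB[OF fin] phi_inj phi_img])
    show "\<forall>b''\<in>?B. qmult (Smash G H \<omega> s) b b' b'' = qmult (Dw G H \<omega>) (phi b) (phi b') (phi b'')"
    proof
      fix b'' assume b'': "b'' \<in> ?B"
      have e: "(phi b'' = phi p) = (b'' = p)" using inj_on_eq_iff[OF phi_inj b'' pB] .
      have "qmult (Smash G H \<omega> s) b b' b'' = (if qconj G H g x = h \<and> b'' = p then qtheta G H \<omega> g x y else 0)"
        by (simp add: Smash_def p_def bb bb')
      moreover have "qmult (Dw G H \<omega>) (phi b) (phi b') (phi b'') = (if qconj G H g x = h \<and> phi b'' = phi p then qtheta G H \<omega> g x y else 0)"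
        using php by (simp add: Dw_def qbar_ms[OF bb(2) bb(4)] qbar_ms[OF bb'(2) bb'(4)] phb)
      ultimately show "qmult (Smash G H \<omega> s) b b' b'' = qmult (Dw G H \<omega>) (phi b) (phi b') (phi b'')"
        using e by simp
    qed
    show "\<forall>c. c \<notin> carrier (G Mod H) \<times> carrier G \<longrightarrow> qmult (Dw G H \<omega>) (phi b) (phi b') c = 0"
      using cB bb(3) by (simp add: Dw_def phb)
  qed
qed

lemma unit_ok: assumes fin: "finite (carrier G)"
  shows "linmap (H \<times> carrier (G Mod H) \<times> carrier (G Mod H)) (ind phi) (qunit (Smash G H \<omega> s)) = qunit (Dw G H \<omega>)"
    and "linmap (H \<times> carrier (G Mod H) \<times> carrier (G Mod H)) (ind phi) (qalpha (Smash G H \<omega> s)) = qalpha (Dw G H \<omega>)"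
    and "linmap (H \<times> carrier (G Mod H) \<times> carrier (G Mod H)) (ind phi) (qbeta (Smash G H \<omega> s)) = qbeta (Dw G H \<omega>)"
proof -
  let ?B = "H \<times> carrier (G Mod H) \<times> carrier (G Mod H)"
  have e: "phi b = (g, m \<otimes> s x) \<and> (m \<otimes> s x = \<one> \<longleftrightarrow> m = \<one> \<and> x = \<one>\<^bsub>G Mod H\<^esub>)"
    if "b = (m, g, x)" "m \<in> H" "x \<in> carrier (G Mod H)" for b m g x
    using ms_one[OF that(2,3)] that(1) by (simp add: phi_def)
  show "linmap ?B (ind phi) (qunit (Smash G H \<omega> s)) = qunit (Dw G H \<omega>)"
  proof (rule lin_eq[OF finB[OF fin] phi_inj phi_img])
    show "\<forall>b\<in>?B. qunit (Smash G H \<omega> s) b = qunit (Dw G H \<omega>) (phi b)"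
      using e by (fastforce simp: Smash_def Dw_def)
  qed (auto simp: Dw_def)
  show "linmap ?B (ind phi) (qalpha (Smash G H \<omega> s)) = qalpha (Dw G H \<omega>)"
  proof (rule lin_eq[OF finB[OF fin] phi_inj phi_img])
    show "\<forall>b\<in>?B. qalpha (Smash G H \<omega> s) b = qalpha (Dw G H \<omega>) (phi b)"
      using e by (fastforce simp: Smash_def Dw_def)
  qed (auto simp: Dw_def)
  show "linmap ?B (ind phi) (qbeta (Smash G H \<omega> s)) = qbeta (Dw G H \<omega>)"
  proof (rule lin_eq[OF finB[OF fin] phi_inj phi_img])
    show "\<forall>b\<in>?B. qbeta (Smash G H \<omega> s) b = qbeta (Dw G H \<omega>) (phi b)"
      using e by (fastforce simp: Smash_def Dw_def)
  qed (auto simp: Dw_def)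
qed

lemma assoc_ok: assumes fin: "finite (carrier G)"
  shows "linmap3 (H \<times> carrier (G Mod H) \<times> carrier (G Mod H)) (ind phi) (qassoc (Smash G H \<omega> s)) = qassoc (Dw G H \<omega>)"
proof -
  let ?B = "H \<times> carrier (G Mod H) \<times> carrier (G Mod H)"
  have e: "phi b = (g, m \<otimes> s x) \<and> (m \<otimes> s x = \<one> \<longleftrightarrow> m = \<one> \<and> x = \<one>\<^bsub>G Mod H\<^esub>)"
    if "b = (m, g, x)" "m \<in> H" "x \<in> carrier (G Mod H)" for b m g x
    using ms_one[OF that(2,3)] that(1) by (simp add: phi_def)
  show ?thesis
  proof (rule lin3_eq[OF finB[OF fin] phi_inj phi_img])
    show "\<forall>b\<in>?B. \<forall>b'\<in>?B. \<forall>b''\<in>?B. qassoc (Smash G H \<omega> s) (b, b', b'') = qassoc (Dw G H \<omega>) (phi b, phi b', phi b'')"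
    proof (intro ballI)
      fix b b' b'' assume b: "b \<in> ?B" and b': "b' \<in> ?B" and b'': "b'' \<in> ?B"
      obtain m g x where bb: "b = (m, g, x)" "m \<in> H" "g \<in> carrier (G Mod H)" "x \<in> carrier (G Mod H)" using b by auto
      obtain n h y where bb': "b' = (n, h, y)" "n \<in> H" "h \<in> carrier (G Mod H)" "y \<in> carrier (G Mod H)" using b' by auto
      obtain k l z where bb'': "b'' = (k, l, z)" "k \<in> H" "l \<in> carrier (G Mod H)" "z \<in> carrier (G Mod H)" using b'' by auto
      show "qassoc (Smash G H \<omega> s) (b, b', b'') = qassoc (Dw G H \<omega>) (phi b, phi b', phi b'')"
        using e[OF bb(1-2) bb(4)] e[OF bb'(1-2) bb'(4)] e[OF bb''(1-2) bb''(4)] bb bb' bb''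
        by (simp add: Smash_def Dw_def)
    qed
  qed (auto simp: Dw_def)
qed

lemma counit_ok: assumes fin: "finite (carrier G)" and b: "b \<in> H \<times> carrier (G Mod H) \<times> carrier (G Mod H)"
  shows "qcounitL (Dw G H \<omega>) (ind phi b) = qcounit (Smash G H \<omega> s) b"
proof -
  have fD: "finite (qbasis (Dw G H \<omega>))" using DB finQ fin by simp
  have pb: "phi b \<in> qbasis (Dw G H \<omega>)" using phi_img b DB by auto
  have "qcounitL (Dw G H \<omega>) (ind phi b) = qcounit (Dw G H \<omega>) (phi b)"
    using qcounitL_ind[OF fD pb] unfolding ind_def by simp
  then show ?thesis using b by (auto simp: Dw_def Smash_def phi_def)
qed

lemma comult_ok: assumes fin: "finite (carrier G)" and b: "b \<in> H \<times> carrier (G Mod H) \<times> carrier (G Mod H)"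
  shows "linmap2 (H \<times> carrier (G Mod H) \<times> carrier (G Mod H)) (ind phi) (qcomult (Smash G H \<omega> s) b)
       = qcomulL (Dw G H \<omega>) (ind phi b)"
proof -
  let ?B = "H \<times> carrier (G Mod H) \<times> carrier (G Mod H)"
  have fD: "finite (qbasis (Dw G H \<omega>))" using DB finQ fin by simp
  have pb: "phi b \<in> qbasis (Dw G H \<omega>)" using phi_img b DB by auto
  have rhs: "qcomulL (Dw G H \<omega>) (ind phi b) = qcomult (Dw G H \<omega>) (phi b)"
    using qcomulL_ind[OF fD pb] unfolding ind_def by simp
  obtain m g x where bb: "b = (m, g, x)" "m \<in> H" "g \<in> carrier (G Mod H)" "x \<in> carrier (G Mod H)" using b by auto
  have phb: "phi b = (g, m \<otimes> s x)" by (simp add: phi_def bb)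
  have cB: "m \<otimes> s x \<in> carrier G" using bb Nc s_carr by simp
  show ?thesis unfolding rhs
  proof (rule lin2_eq[OF finB[OF fin] phi_inj phi_img])
    show "\<forall>b1\<in>?B. \<forall>b2\<in>?B. qcomult (Smash G H \<omega> s) b (b1, b2) = qcomult (Dw G H \<omega>) (phi b) (phi b1, phi b2)"
    proof (intro ballI)
      fix b1 b2 assume b1: "b1 \<in> ?B" and b2: "b2 \<in> ?B"
      obtain m1 a x1 where c1: "b1 = (m1, a, x1)" "m1 \<in> H" "a \<in> carrier (G Mod H)" "x1 \<in> carrier (G Mod H)" using b1 by auto
      obtain m2 c x2 where c2: "b2 = (m2, c, x2)" "m2 \<in> H" "c \<in> carrier (G Mod H)" "x2 \<in> carrier (G Mod H)" using b2 by auto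
      have p1: "phi b1 = (a, m1 \<otimes> s x1)" "phi b2 = (c, m2 \<otimes> s x2)" by (simp_all add: phi_def c1 c2)
      show "qcomult (Smash G H \<omega> s) b (b1, b2) = qcomult (Dw G H \<omega>) (phi b) (phi b1, phi b2)"
        unfolding phb p1 using ms_inj[OF c1(2) bb(2) c1(4) bb(4)] ms_inj[OF c2(2) bb(2) c2(4) bb(4)]
          qbar_ms[OF bb(2) bb(4)]
        by (simp add: Smash_def Dw_def bb(1) c1(1) c2(1))
    qed
    show "\<forall>c c'. c \<notin> carrier (G Mod H) \<times> carrier G \<or> c' \<notin> carrier (G Mod H) \<times> carrier G \<longrightarrow>
        qcomult (Dw G H \<omega>) (phi b) (c, c') = 0"
      using cB by (auto simp: Dw_def phb)
  qed
qed

lemma anti_ok: assumes fin: "finite (carrier G)" and b: "b \<in> H \<times> carrier (G Mod H) \<times> carrier (G Mod H)"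
  shows "linmap (H \<times> carrier (G Mod H) \<times> carrier (G Mod H)) (ind phi) (qantipode (Smash G H \<omega> s) b)
       = qantipodeL (Dw G H \<omega>) (ind phi b)"
proof -
  let ?B = "H \<times> carrier (G Mod H) \<times> carrier (G Mod H)"
  have fD: "finite (qbasis (Dw G H \<omega>))" using DB finQ fin by simp
  have pb: "phi b \<in> qbasis (Dw G H \<omega>)" using phi_img b DB by auto
  have rhs: "qantipodeL (Dw G H \<omega>) (ind phi b) = qantipode (Dw G H \<omega>) (phi b)"
    using qantipodeL_ind[OF fD pb] unfolding ind_def by simp
  obtain m g x where bb: "b = (m, g, x)" "m \<in> H" "g \<in> carrier (G Mod H)" "x \<in> carrier (G Mod H)" using b by auto
  have phb: "phi b = (g, m \<otimes> s x)" by (simp add: phi_def bb)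
  have cB: "inv (m \<otimes> s x) \<in> carrier G" using bb Nc s_carr by simp
  define p where "p = (inv m \<otimes> inv (qsigma G H s x (inv\<^bsub>G Mod H\<^esub> x)),
                qconj G H (inv\<^bsub>G Mod H\<^esub> g) x, inv\<^bsub>G Mod H\<^esub> x)"
  have pB: "p \<in> ?B" unfolding p_def using Hm Hi sigma_N invQ conjQ bb by auto
  have php: "phi p = (qconj G H (inv\<^bsub>G Mod H\<^esub> g) x, inv (m \<otimes> s x))"
    using key_anti[OF bb(2) bb(4)] by (simp add: phi_def p_def)
  have cQ: "qconj G H (inv\<^bsub>G Mod H\<^esub> g) x \<in> carrier (G Mod H)" using conjQ invQ bb by blast
  show ?thesis unfolding rhs
  proof (rule lin_eq[OF finB[OF fin] phi_inj phi_img])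
    show "\<forall>b''\<in>?B. qantipode (Smash G H \<omega> s) b b'' = qantipode (Dw G H \<omega>) (phi b) (phi b'')"
    proof
      fix b'' assume b'': "b'' \<in> ?B"
      have e: "(phi b'' = phi p) = (b'' = p)" using inj_on_eq_iff[OF phi_inj b'' pB] .
      have "qantipode (Smash G H \<omega> s) b b'' = (if b'' = p then
             qtheta G H \<omega> (inv\<^bsub>G Mod H\<^esub> g) x (inv\<^bsub>G Mod H\<^esub> x) / qgamma G H \<omega> x g (inv\<^bsub>G Mod H\<^esub> g) else 0)"
        by (simp add: Smash_def p_def bb)
      moreover have "qantipode (Dw G H \<omega>) (phi b) (phi b'') = (if phi b'' = phi p then
             qtheta G H \<omega> (inv\<^bsub>G Mod H\<^esub> g) x (inv\<^bsub>G Mod H\<^esub> x) / qgamma G H \<omega> x g (inv\<^bsub>G Mod H\<^esub> g) else 0)"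
        using php by (simp add: Dw_def qbar_ms[OF bb(2) bb(4)] phb)
      ultimately show "qantipode (Smash G H \<omega> s) b b'' = qantipode (Dw G H \<omega>) (phi b) (phi b'')"
        using e by simp
    qed
    show "\<forall>c. c \<notin> carrier (G Mod H) \<times> carrier G \<longrightarrow> qantipode (Dw G H \<omega>) (phi b) c = 0"
      using cB cQ qbar_ms[OF bb(2) bb(4)] by (simp add: Dw_def phb)
  qed
qed

lemma main_ok: assumes fin: "finite (carrier G)"
  shows "qh_iso (Smash G H \<omega> s) (Dw G H \<omega>) (ind phi)"
  unfolding qh_iso_def Let_def qvecs_def SB DB
  using finB[OF fin] finQ[OF fin] fin
    lin_bij[OF finB[OF fin] phi_inj phi_img]
    mult_ok[OF fin] unit_ok[OF fin] comult_ok[OF fin] assoc_ok[OF fin] counit_ok[OF fin] anti_ok[OF fin]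
  by auto

end

theorem lemma2p2:
  fixes G :: "('a, 'm) monoid_scheme" and N :: "'a set"
    and \<omega> :: "'a set \<Rightarrow> 'a set \<Rightarrow> 'a set \<Rightarrow> complex" and s :: "'a set \<Rightarrow> 'a"
  assumes "group G" and "finite (carrier G)" and "N \<lhd> G"
    and "\<forall>n\<in>N. \<forall>g\<in>carrier G. n \<otimes>\<^bsub>G\<^esub> g = g \<otimes>\<^bsub>G\<^esub> n"
    and "normalized_3cocycle (G Mod N) \<omega>"
    and "\<forall>a\<in>carrier (G Mod N). s a \<in> a"
    and "s \<one>\<^bsub>G Mod N\<^esub> = \<one>\<^bsub>G\<^esub>"
  shows "\<exists>M. qh_iso (Smash G N \<omega> s) (Dw G N \<omega>) M"
proof -
  have "L22 N G s" unfolding L22_def L22_axioms_def using assms by auto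
  then show ?thesis using L22.main_ok[of N G s \<omega>] assms(2) by blast
qed

end
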